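(* Let $(r_k)_{k\in\mathbb{N}}$ be a sequence of nonnegative reals with $r_1=1$, $\sum_{k=1}^\infty r_k<\infty$, such that $r_i=0$ implies $r_j=0$ for all $j\geq i$, and suppose there is a constant $c_0>0$ with $\sum_{k=M}^\infty r_k\leq c_0/M$ for all integers $M\geq2$. Let $g:[1,\infty)\to[0,\infty)$ be a continuous, strictly decreasing function with $\sum_{i=M}^\infty r_i\leq g(M)$ for all integers $M\ge2$ and $g(s)\leq c_0/s$ for all $s\in[1,\infty)$. Fix $d\ge1$ and a discrete probability measure $\mu=\sum_{i=1}^\infty\alpha_i\delta_{y_i}$ on $[0,1]^d$ ($y_i\in[0,1]^d$, $\alpha_i\ge0$, $\sum_i\alpha_i=1$, $\alpha_1>0$) with $\alpha_k\leq r_k\alpha_1$ for all $k$. Then for every integer $N\geq2$ such that $\frac{1}{N\alpha_1}$ lies in the range of $g$, there exist points $x_1^N,\dots,x_N^N\in[0,1]^d$ such that $\nu_N=\frac1N\sum_{i=1}^N\delta_{x_i^N}$ satisfies $$\rho(\mu;\nu_N)<(6c_0+3)\,\frac{g^{-1}\!\left(\frac{1}{N\alpha_1}\right)}{N}.$$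
   Context: $\delta_y$ denotes the Dirac measure at $y$. For probability measures $\mu,\nu$ on $[0,1]^d$, the total variation distance is $\rho(\mu;\nu)=\sup_{A}|\mu(A)-\nu(A)|$, the supremum taken over all Borel sets $A\subseteq[0,1]^d$. $g^{-1}$ denotes the inverse function of $g$. *)

theory Defs
  imports "HOL-Analysis.Analysis"
begin

definition disc_meas :: "(nat \<Rightarrow> real) \<Rightarrow> (nat \<Rightarrow> 'a) \<Rightarrow> 'a set \<Rightarrow> real" where
  "disc_meas \<alpha> y A = (\<Sum>\<^sub>\<infinity>i\<in>{1..}. \<alpha> i * indicator A (y i))"

definition emp_meas :: "nat \<Rightarrow> (nat \<Rightarrow> 'a) \<Rightarrow> 'a set \<Rightarrow> real" where
  "emp_meas N x A = (1 / real N) * (\<Sum>i=1..N. indicator A (x i))"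

definition tv_dist :: "('a::euclidean_space set \<Rightarrow> real) \<Rightarrow> ('a set \<Rightarrow> real) \<Rightarrow> real" where
  "tv_dist \<mu> \<nu> = (SUP A\<in>{A. A \<in> sets borel \<and> A \<subseteq> cbox 0 One}. \<bar>\<mu> A - \<nu> A\<bar>)"

end

theory Submission
  imports Defs
begin

theorem theorem2p3:
  fixes r :: "nat \<Rightarrow> real" and g :: "real \<Rightarrow> real" and c0 :: real
    and \<alpha> :: "nat \<Rightarrow> real" and y :: "nat \<Rightarrow> 'a::euclidean_space" and N :: nat
  assumes r_nonneg: "\<And>k. k \<ge> 1 \<Longrightarrow> r k \<ge> 0"
    and r1: "r 1 = 1"
    and r_summable: "r summable_on {1..}"
    and r_zero: "\<And>i j. 1 \<le> i \<Longrightarrow> i \<le> j \<Longrightarrow> r i = 0 \<Longrightarrow> r j = 0"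
    and c0_pos: "c0 > 0"
    and r_tail: "\<And>M. M \<ge> 2 \<Longrightarrow> (\<Sum>\<^sub>\<infinity>k\<in>{M..}. r k) \<le> c0 / real M"
    and g_cont: "continuous_on {1..} g"
    and g_nonneg: "\<And>s. s \<ge> 1 \<Longrightarrow> g s \<ge> 0"
    and g_strict_dec: "\<And>s t. 1 \<le> s \<Longrightarrow> s < t \<Longrightarrow> g t < g s"
    and g_tail: "\<And>M. M \<ge> 2 \<Longrightarrow> (\<Sum>\<^sub>\<infinity>i\<in>{M..}. r i) \<le> g (real M)"
    and g_bound: "\<And>s. s \<ge> 1 \<Longrightarrow> g s \<le> c0 / s"
    and y_cube: "\<And>i. i \<ge> 1 \<Longrightarrow> y i \<in> cbox 0 One"
    and \<alpha>_nonneg: "\<And>i. i \<ge> 1 \<Longrightarrow> \<alpha> i \<ge> 0"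
    and \<alpha>_summable: "\<alpha> summable_on {1..}"
    and \<alpha>_sum: "(\<Sum>\<^sub>\<infinity>i\<in>{1..}. \<alpha> i) = 1"
    and \<alpha>1_pos: "\<alpha> 1 > 0"
    and \<alpha>_le: "\<And>k. k \<ge> 1 \<Longrightarrow> \<alpha> k \<le> r k * \<alpha> 1"
    and N2: "N \<ge> 2"
    and in_range: "1 / (real N * \<alpha> 1) \<in> g ` {1..}"
  shows "\<exists>x :: nat \<Rightarrow> 'a. (\<forall>i\<in>{1..N}. x i \<in> cbox 0 One) \<and>
    tv_dist (disc_meas \<alpha> y) (emp_meas N x)
      < (6 * c0 + 3) * the_inv_into {1..} g (1 / (real N * \<alpha> 1)) / real N"
proof -
  define v where "v = 1 / (real N * \<alpha> 1)"
  have injg: "inj_on g {1..}"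
    by (rule inj_onI) (metis atLeast_iff g_strict_dec linorder_neqE_linordered_idom order.strict_iff_not)
  define s where "s = the_inv_into {1..} g v"
  have s1: "s \<ge> 1" and gs: "g s = v"
    using the_inv_into_into[OF injg, of v "{1..}"] f_the_inv_into_f[OF injg, of v] in_range
    unfolding s_def v_def by auto
  have Npos: "real N > 0" using N2 by simp
  define M where "M = nat (max 2 \<lceil>s\<rceil>)"
  have M2: "M \<ge> 2" unfolding M_def by simp
  have Ms: "real M \<ge> s" unfolding M_def by linarith
  have Ms2: "real M \<le> s + 1" unfolding M_def using s1 by linarith
  have gM: "g (real M) \<le> g s"
    using Ms g_strict_dec[OF s1, of "real M"] by (cases "real M = s") auto
  define F where "F = {1..<M}"
  define n where "n i = nat \<lfloor>real N * \<alpha> i\<rfloor>" for i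
  have n_le: "real (n i) \<le> real N * \<alpha> i" if "i \<ge> 1" for i
    using \<alpha>_nonneg[OF that] Npos unfolding n_def by simp
  have n_ge: "real N * \<alpha> i - 1 \<le> real (n i)" for i
    unfolding n_def by linarith
  have summ_tail: "\<alpha> summable_on {M..}"
    using summable_on_subset_banach[OF \<alpha>_summable] M2 by auto
  define T where "T = (\<Sum>\<^sub>\<infinity>i\<in>{M..}. \<alpha> i)"
  have split1: "{1..} = F \<union> {M..}" "F \<inter> {M..} = {}" using M2 unfolding F_def by auto
  have sumF: "(\<Sum>i\<in>F. \<alpha> i) + T = 1"
    using infsum_Un_disjoint[of \<alpha> F "{M..}"] summ_tail split1 \<alpha>_sum
    unfolding T_def F_def by (simp add: infsum_finite)
  have T0: "T \<ge> 0" unfolding T_def using M2 by (intro infsum_nonneg \<alpha>_nonneg) auto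
  have rtail: "r summable_on {M..}"
    using summable_on_subset_banach[OF r_summable] M2 by auto
  have "T \<le> (\<Sum>\<^sub>\<infinity>i\<in>{M..}. r i * \<alpha> 1)"
    unfolding T_def using M2 by (intro infsum_mono summ_tail summable_on_cmult_left rtail \<alpha>_le) auto
  also have "\<dots> = (\<Sum>\<^sub>\<infinity>i\<in>{M..}. r i) * \<alpha> 1" by (rule infsum_cmult_left) (use rtail in auto)
  also have "\<dots> \<le> g (real M) * \<alpha> 1" using g_tail[OF M2] \<alpha>1_pos by simp
  also have "\<dots> \<le> v * \<alpha> 1" using gM gs \<alpha>1_pos by simp
  also have "\<dots> = 1 / real N" unfolding v_def using \<alpha>1_pos by simp
  finally have Tle: "T \<le> 1 / real N" .
  define S where "S = (\<Sum>i\<in>F. n i)"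
  have "real S \<le> (\<Sum>i\<in>F. real N * \<alpha> i)" unfolding S_def of_nat_sum
    by (intro sum_mono n_le) (auto simp: F_def)
  also have "\<dots> = real N * (\<Sum>i\<in>F. \<alpha> i)" by (simp add: sum_distrib_left)
  also have "\<dots> \<le> real N" using sumF T0 Npos by simp
  finally have SN: "S \<le> N" by simp
  define R where "R = N - S"
  have RS: "real R = real N - real S" unfolding R_def using SN by simp
  define L where "L = concat (map (\<lambda>i. replicate (n i) (y i)) [1..<M]) @ replicate R (y 1)"
  have lenL: "length L = N"
  proof -
    have "length (concat (map (\<lambda>i. replicate (n i) (y i)) [1..<M])) = S"
      unfolding S_def F_def length_concat map_map o_def length_replicate
      by (simp add: sum_set_upt_conv_sum_list_nat[symmetric])
    then show ?thesis unfolding L_def R_def using SN by simp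
  qed
  have setL: "set L \<subseteq> cbox 0 One" unfolding L_def using y_cube by auto
  define x where "x i = L ! (i - 1)" for i
  have xcube: "\<forall>i\<in>{1..N}. x i \<in> cbox 0 One"
  proof
    fix i assume "i \<in> {1..N}"
    then have "i - 1 < length L" using lenL by auto
    then show "x i \<in> cbox 0 One" unfolding x_def using setL nth_mem by blast
  qed
  have key: "\<bar>disc_meas \<alpha> y A - emp_meas N x A\<bar> \<le> real M / real N" for A
  proof -
    define ind where "ind i = (indicator A (y i) :: real)" for i
    have ind01: "0 \<le> ind i" "ind i \<le> 1" for i unfolding ind_def by (auto simp: indicator_def)
    have sumx: "(\<Sum>i=1..N. indicator A (x i)) = (\<Sum>i\<in>F. real (n i) * ind i) + real R * ind 1"
    proof -
      have "(\<Sum>i=1..N. indicator A (x i)) = (\<Sum>i=0..<length L. (indicator A (L ! i) :: real))"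
        unfolding x_def lenL by (rule sum.reindex_bij_witness[where i="\<lambda>i. i+1" and j="\<lambda>i. i - 1"]) auto
      also have "\<dots> = sum_list (map (indicator A) L)"
        by (simp add: sum_list_sum_nth)
      also have "\<dots> = (\<Sum>i\<in>F. real (n i) * ind i) + real R * ind 1"
      proof -
        have "sum_list (map (indicator A) (concat (map (\<lambda>i. replicate (n i) (y i)) [1..<M])))
           = sum_list (map (\<lambda>i. real (n i) * ind i) [1..<M])"
          by (induction M) (simp_all add: ind_def sum_list_replicate)
        then show ?thesis unfolding L_def F_def
          by (simp add: sum_set_upt_conv_sum_list_nat[symmetric] ind_def sum_list_replicate)
      qed
      finally show ?thesis .
    qed
    have summA: "(\<lambda>i. \<alpha> i * ind i) summable_on {1..}"
      by (rule summable_on_comparison_test[OF \<alpha>_summable])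
         (use \<alpha>_nonneg ind01 in \<open>auto intro: mult_left_le mult_nonneg_nonneg\<close>)
    have summA2: "(\<lambda>i. \<alpha> i * ind i) summable_on {M..}"
      using summable_on_subset_banach[OF summA] M2 by auto
    define TA where "TA = (\<Sum>\<^sub>\<infinity>i\<in>{M..}. \<alpha> i * ind i)"
    have mu: "disc_meas \<alpha> y A = (\<Sum>i\<in>F. \<alpha> i * ind i) + TA"
      unfolding disc_meas_def ind_def[symmetric] TA_def split1(1)
      using infsum_Un_disjoint[OF _ summA2 split1(2)] by (simp add: infsum_finite F_def)
    have TA0: "0 \<le> TA" unfolding TA_def using M2 ind01 \<alpha>_nonneg
      by (intro infsum_nonneg mult_nonneg_nonneg) auto
    have TAT: "TA \<le> T" unfolding TA_def T_def using M2 ind01 \<alpha>_nonneg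
      by (intro infsum_mono summA2 summ_tail) (auto intro: mult_left_le)
    define e where "e i = \<alpha> i - real (n i) / real N" for i
    have e0: "0 \<le> e i" if "i \<in> F" for i unfolding e_def using n_le[of i] that Npos
      by (auto simp: F_def field_simps)
    have e1: "e i \<le> 1 / real N" for i
    proof -
      have "\<alpha> i \<le> (real (n i) + 1) / real N" using n_ge[of i] Npos by (simp add: field_simps)
      then show ?thesis unfolding e_def by (simp add: add_divide_distrib)
    qed
    define P where "P = (\<Sum>i\<in>F. e i * ind i) + TA"
    define Q where "Q = (\<Sum>i\<in>F. e i) + T"
    have nu: "emp_meas N x A = (\<Sum>i\<in>F. real (n i) / real N * ind i) + real R / real N * ind 1"
    proof -
      have "(\<Sum>i\<in>F. real (n i) / real N * ind i) = (\<Sum>i\<in>F. real (n i) * ind i) / real N"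
        by (simp add: sum_divide_distrib)
      then show ?thesis unfolding emp_meas_def sumx using Npos by (simp add: field_simps)
    qed
    have diff: "disc_meas \<alpha> y A - emp_meas N x A = P - real R / real N * ind 1"
    proof -
      have "(\<Sum>i\<in>F. e i * ind i) = (\<Sum>i\<in>F. \<alpha> i * ind i) - (\<Sum>i\<in>F. real (n i) / real N * ind i)"
        unfolding e_def by (simp only: sum_subtractf[symmetric] left_diff_distrib)
      then show ?thesis unfolding mu nu P_def by linarith
    qed
    have RQ: "real R / real N = Q"
    proof -
      have "real R / real N = 1 - (\<Sum>i\<in>F. real (n i) / real N)"
      proof -
        have "real R / real N = 1 - real S / real N" unfolding RS using Npos by (simp add: diff_divide_distrib)
        moreover have "real S / real N = (\<Sum>i\<in>F. real (n i) / real N)"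
          unfolding S_def of_nat_sum by (rule sum_divide_distrib)
        ultimately show ?thesis by simp
      qed
      also have "\<dots> = Q" unfolding Q_def e_def using sumF by (simp add: sum_subtractf)
      finally show ?thesis .
    qed
    have P0: "0 \<le> P" unfolding P_def using e0 ind01 TA0
      by (intro add_nonneg_nonneg sum_nonneg mult_nonneg_nonneg) auto
    have PQ: "P \<le> Q" unfolding P_def Q_def
      by (intro add_mono TAT sum_mono) (use e0 ind01 in \<open>auto intro: mult_left_le\<close>)
    have "Q \<le> (\<Sum>i\<in>F. 1 / real N) + 1 / real N"
      unfolding Q_def by (intro add_mono sum_mono e1 Tle)
    also have "\<dots> = real M / real N" unfolding F_def using M2 Npos
      by (simp add: field_simps of_nat_diff)
    finally have QM: "Q \<le> real M / real N" .
    have "0 \<le> Q * ind 1" "Q * ind 1 \<le> Q" using P0 PQ ind01[of 1]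
      by (auto intro: mult_left_le)
    then show ?thesis unfolding diff RQ using P0 PQ QM by linarith
  qed
  have tv: "tv_dist (disc_meas \<alpha> y) (emp_meas N x) \<le> real M / real N"
    unfolding tv_dist_def
    by (rule cSUP_least) (auto intro: key)
  have "real M / real N < (6 * c0 + 3) * s / real N"
  proof -
    have "0 < 6 * c0 * s" using c0_pos s1 by simp
    then have "real M < (6 * c0 + 3) * s" using Ms2 s1 by (simp add: distrib_right)
    then show ?thesis using Npos by (rule divide_strict_right_mono)
  qed
  then show ?thesis using xcube tv unfolding s_def v_def by (intro exI[of _ x]) auto
qed

end
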